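(* Let $\mathcal{S}^1,\dots,\mathcal{S}^k$ be level-disjoint partitions of a connected graph $G$, all rooted in the same vertex $v$. Then $\max_{1\le i\le k} h(\mathcal{S}^i)\ge \mathrm{ecc}(v)+k-1$ if $G$ is not bipartite, and $\max_{1\le i\le k} h(\mathcal{S}^i)\ge \mathrm{ecc}(v)+2k-2$ if $G$ is bipartite.
   Context: For $S\subseteq V(G)$, $N(S)$ is the set of vertices adjacent to some vertex of $S$. A level partition of $G$ is a tuple $\mathcal{S}=(S_0,\dots,S_h)$ of pairwise disjoint sets with union $V(G)$ such that $S_i\subseteq N(S_{i-1})$ for $1\le i\le h$; $h(\mathcal{S})=h$ is its height; it is rooted in $v$ if $S_0=\{v\}$. Level partitions are level-disjoint if for every two of them $\mathcal{S},\mathcal{T}$, $S_i\cap T_i=\emptyset$ for every $1\le i\le\min(h(\mathcal{S}),h(\mathcal{T}))$. $\mathrm{ecc}(v)=\max_{u\in V(G)} d(u,v)$. *)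

theory Defs
  imports Main
begin

definition simple_graph :: "'a set \<Rightarrow> ('a \<Rightarrow> 'a \<Rightarrow> bool) \<Rightarrow> bool" where
  "simple_graph V E \<longleftrightarrow> finite V \<and> (\<forall>x y. E x y \<longrightarrow> x \<in> V \<and> y \<in> V)
     \<and> (\<forall>x y. E x y \<longrightarrow> E y x) \<and> (\<forall>x. \<not> E x x)"

text \<open>Walk given as list of vertices; its length is the number of edges.\<close>
definition is_walk :: "'a set \<Rightarrow> ('a \<Rightarrow> 'a \<Rightarrow> bool) \<Rightarrow> 'a list \<Rightarrow> bool" where
  "is_walk V E p \<longleftrightarrow> p \<noteq> [] \<and> set p \<subseteq> V \<and> (\<forall>i. Suc i < length p \<longrightarrow> E (p ! i) (p ! Suc i))"

definition connected_graph :: "'a set \<Rightarrow> ('a \<Rightarrow> 'a \<Rightarrow> bool) \<Rightarrow> bool" where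
  "connected_graph V E \<longleftrightarrow> (\<forall>u\<in>V. \<forall>w\<in>V. \<exists>p. is_walk V E p \<and> hd p = u \<and> last p = w)"

definition bipartite_graph :: "'a set \<Rightarrow> ('a \<Rightarrow> 'a \<Rightarrow> bool) \<Rightarrow> bool" where
  "bipartite_graph V E \<longleftrightarrow> (\<exists>A \<subseteq> V. \<forall>x y. E x y \<longrightarrow> (x \<in> A \<longleftrightarrow> y \<notin> A))"

definition gdist :: "'a set \<Rightarrow> ('a \<Rightarrow> 'a \<Rightarrow> bool) \<Rightarrow> 'a \<Rightarrow> 'a \<Rightarrow> nat" where
  "gdist V E u w = (LEAST n. \<exists>p. is_walk V E p \<and> hd p = u \<and> last p = w \<and> length p = Suc n)"

definition ecc :: "'a set \<Rightarrow> ('a \<Rightarrow> 'a \<Rightarrow> bool) \<Rightarrow> 'a \<Rightarrow> nat" where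
  "ecc V E v = Max ((\<lambda>u. gdist V E u v) ` V)"

definition nbhd :: "('a \<Rightarrow> 'a \<Rightarrow> bool) \<Rightarrow> 'a set \<Rightarrow> 'a set" where
  "nbhd E S = {y. \<exists>x\<in>S. E x y}"

text \<open>A level partition (S_0,...,S_h) is represented as a list of length h+1.\<close>
definition level_partition :: "'a set \<Rightarrow> ('a \<Rightarrow> 'a \<Rightarrow> bool) \<Rightarrow> 'a set list \<Rightarrow> bool" where
  "level_partition V E S \<longleftrightarrow> S \<noteq> []
     \<and> (\<forall>i j. i < length S \<longrightarrow> j < length S \<longrightarrow> i \<noteq> j \<longrightarrow> S ! i \<inter> S ! j = {})
     \<and> \<Union> (set S) = V
     \<and> (\<forall>i. 1 \<le> i \<longrightarrow> i < length S \<longrightarrow> S ! i \<subseteq> nbhd E (S ! (i - 1)))"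

definition height :: "'a set list \<Rightarrow> nat" where
  "height S = length S - 1"

definition rooted_in :: "'a set list \<Rightarrow> 'a \<Rightarrow> bool" where
  "rooted_in S v \<longleftrightarrow> S \<noteq> [] \<and> S ! 0 = {v}"

definition level_disjoint :: "'a set list \<Rightarrow> 'a set list \<Rightarrow> bool" where
  "level_disjoint S T \<longleftrightarrow> (\<forall>i. 1 \<le> i \<longrightarrow> i \<le> min (height S) (height T) \<longrightarrow> S ! i \<inter> T ! i = {})"

end

theory Submission
  imports Defs
begin

lemma walk_level:
  assumes sg: "simple_graph V E" and lp: "level_partition V E S" and r: "rooted_in S v"
  shows "j < length S \<Longrightarrow> u \<in> S!j \<Longrightarrow> \<exists>p. is_walk V E p \<and> hd p = u \<and> last p = v \<and> length p = Suc j"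
proof (induction j arbitrary: u)
  case 0
  then have "u = v" using r by (simp add: rooted_in_def)
  moreover have "v \<in> V" using lp r unfolding level_partition_def rooted_in_def
    by (metis Union_iff insertI1 nth_mem length_greater_0_conv)
  ultimately show ?case by (intro exI[of _ "[v]"]) (simp add: is_walk_def)
next
  case (Suc j)
  have "\<forall>i. 1 \<le> i \<longrightarrow> i < length S \<longrightarrow> S ! i \<subseteq> nbhd E (S ! (i - 1))"
    using lp unfolding level_partition_def by blast
  then have "1 \<le> Suc j \<longrightarrow> Suc j < length S \<longrightarrow> S ! Suc j \<subseteq> nbhd E (S ! (Suc j - 1))" by (rule spec)
  then have "S ! Suc j \<subseteq> nbhd E (S ! j)" using Suc.prems(1) by simp
  then obtain x where x: "x \<in> S!j" "E x u" using Suc.prems by (auto simp: nbhd_def)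
  from Suc.IH[of x] Suc.prems x obtain p where p: "is_walk V E p" "hd p = x" "last p = v" "length p = Suc j" by auto
  have "E u x" using sg x by (simp add: simple_graph_def)
  have "u \<in> V" using sg x by (simp add: simple_graph_def)
  have "is_walk V E (u#p)" unfolding is_walk_def
  proof (intro conjI allI impI)
    show "u#p \<noteq> []" by simp
    show "set (u#p) \<subseteq> V" using p \<open>u\<in>V\<close> by (simp add: is_walk_def)
    fix i assume i: "Suc i < length (u#p)"
    show "E ((u#p)!i) ((u#p)! Suc i)"
    proof (cases i)
      case 0 then show ?thesis using p \<open>E u x\<close> by (cases p) auto
    next
      case (Suc m) then show ?thesis using p i by (simp add: is_walk_def)
    qed
  qed
  moreover have "p \<noteq> []" using p(4) by auto
  ultimately show ?case using p by (intro exI[of _ "u#p"]) simp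
qed

lemma walk_parity:
  assumes w: "is_walk V E p" and A: "\<forall>x y. E x y \<longrightarrow> (x \<in> A \<longleftrightarrow> y \<notin> A)"
  shows "i < length p \<Longrightarrow> (p!i \<in> A \<longleftrightarrow> (p!0 \<in> A \<longleftrightarrow> even i))"
proof (induction i)
  case 0 show ?case by simp
next
  case (Suc i)
  have "E (p!i) (p!Suc i)" using w Suc.prems by (simp add: is_walk_def)
  then show ?case using Suc A by auto
qed

lemma walk_parity2:
  assumes w: "is_walk V E p" and A: "\<forall>x y. E x y \<longrightarrow> (x \<in> A \<longleftrightarrow> y \<notin> A)"
    and "hd p = u" "last p = v" "length p = Suc n"
  shows "v \<in> A \<longleftrightarrow> (u \<in> A \<longleftrightarrow> even n)"
proof -
  have "p \<noteq> []" using assms by auto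
  then have "p!0 = u" "p!n = v" using assms by (auto simp: hd_conv_nth last_conv_nth)
  then show ?thesis using walk_parity[OF w A, of n] assms by auto
qed

lemma comb1:
  fixes f :: "nat \<Rightarrow> nat"
  assumes "inj_on f I" "finite I" "\<forall>i\<in>I. e \<le> f i \<and> f i \<le> H" "I \<noteq> {}"
  shows "e + card I - 1 \<le> H"
proof -
  have "f ` I \<subseteq> {e..H}" using assms(3) by auto
  hence "card (f`I) \<le> card {e..H}" by (intro card_mono) auto
  hence "card I \<le> Suc H - e" using card_image[OF assms(1)] by simp
  moreover obtain i where "i\<in>I" using assms(4) by auto
  hence "e \<le> H" using assms(3) by force
  ultimately show ?thesis by linarith
qed

lemma comb2:
  fixes f :: "nat \<Rightarrow> nat"
  assumes "inj_on f I" "finite I" "\<forall>i\<in>I. e \<le> f i \<and> f i \<le> H" "I \<noteq> {}"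
    and par: "\<forall>i\<in>I. even (f i) = even e"
  shows "e + 2 * card I - 2 \<le> H"
proof -
  let ?g = "\<lambda>x. (x - e) div 2"
  have ig: "inj_on ?g (f ` I)"
    unfolding inj_on_def
  proof (intro ballI impI)
    fix x y assume "x \<in> f ` I" "y \<in> f ` I" and eq: "(x - e) div 2 = (y - e) div 2"
    then have "e \<le> x" "e \<le> y" "even x = even e" "even y = even e" using assms(3) par by auto
    then have "even (x - e)" "even (y - e)" by (auto simp: even_diff_nat)
    then have "x - e = 2 * ((x - e) div 2)" "y - e = 2 * ((y - e) div 2)" by simp_all
    then show "x = y" using eq \<open>e \<le> x\<close> \<open>e \<le> y\<close> by linarith
  qed
  have "inj_on (?g \<circ> f) I" using comp_inj_on[OF assms(1) ig] .
  then have c: "card ((?g \<circ> f) ` I) = card I" by (rule card_image)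
  have "(?g \<circ> f) ` I \<subseteq> {0..(H - e) div 2}" using assms(3) by (auto intro: div_le_mono)
  hence "card ((?g \<circ> f) ` I) \<le> card {0..(H - e) div 2}" by (intro card_mono) auto
  hence "card I \<le> (H - e) div 2 + 1" using c by simp
  moreover obtain i where "i\<in>I" using assms(4) by auto
  hence "e \<le> H" using assms(3) by force
  moreover have "2 * ((H - e) div 2) \<le> H - e" by simp
  ultimately show ?thesis by linarith
qed

theorem mainTheorem6:
  fixes V :: "'a set" and E :: "'a \<Rightarrow> 'a \<Rightarrow> bool" and v :: 'a
    and k :: nat and P :: "nat \<Rightarrow> 'a set list"
  assumes "simple_graph V E" and "connected_graph V E" and "card V \<ge> 2"
    and "v \<in> V" and "k \<ge> 1"
    and "\<forall>i\<in>{1..k}. level_partition V E (P i) \<and> rooted_in (P i) v"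
    and "\<forall>i\<in>{1..k}. \<forall>j\<in>{1..k}. i \<noteq> j \<longrightarrow> level_disjoint (P i) (P j)"
  shows "(\<not> bipartite_graph V E \<longrightarrow> Max ((\<lambda>i. height (P i)) ` {1..k}) \<ge> ecc V E v + k - 1)
       \<and> (bipartite_graph V E \<longrightarrow> Max ((\<lambda>i. height (P i)) ` {1..k}) \<ge> ecc V E v + 2 * k - 2)"
proof -
  note sg = assms(1) and conn = assms(2) and cV = assms(3) and vV = assms(4) and k1 = assms(5)
    and PP = assms(6) and D = assms(7)
  have fin: "finite V" using sg by (simp add: simple_graph_def)
  have "Max ((\<lambda>u. gdist V E u v) ` V) \<in> (\<lambda>u. gdist V E u v) ` V"
    by (rule Max_in) (use fin vV in auto)
  then obtain u where u: "u \<in> V" "gdist V E u v = ecc V E v" unfolding ecc_def by auto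
  define e where "e = ecc V E v"
  have ex_walk: "\<exists>p. is_walk V E p \<and> hd p = w \<and> last p = v \<and> length p = Suc (gdist V E w v)"
    if w: "w \<in> V" for w
  proof -
    obtain p where p: "is_walk V E p" "hd p = w" "last p = v" using conn w vV
      unfolding connected_graph_def by blast
    have "\<exists>n. \<exists>p. is_walk V E p \<and> hd p = w \<and> last p = v \<and> length p = Suc n"
      using p by (intro exI[of _ "length p - 1"] exI[of _ p]) (auto simp: is_walk_def)
    from LeastI_ex[OF this] show ?thesis unfolding gdist_def .
  qed
  have "\<not> V \<subseteq> {v}"
  proof
    assume "V \<subseteq> {v}" then have "card V \<le> card {v}" using card_mono[of "{v}" V] by simp
    then show False using cV by simp
  qed
  then obtain w where w: "w \<in> V" "w \<noteq> v" by auto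
  have e1: "1 \<le> e"
  proof -
    obtain p where p: "is_walk V E p" "hd p = w" "last p = v" "length p = Suc (gdist V E w v)"
      using ex_walk[OF w(1)] by blast
    have "gdist V E w v \<noteq> 0"
    proof
      assume "gdist V E w v = 0"
      then have "length p = 1" using p by simp
      then obtain a where "p = [a]" by (cases p) auto
      then show False using p w by simp
    qed
    moreover have "gdist V E w v \<le> ecc V E v" unfolding ecc_def
      by (rule Max_ge) (use fin w in auto)
    ultimately show ?thesis unfolding e_def by simp
  qed
  define f where "f i = (SOME j. j < length (P i) \<and> u \<in> P i ! j)" for i
  have fP: "f i < length (P i) \<and> u \<in> P i ! f i" if i: "i \<in> {1..k}" for i
  proof -
    have "u \<in> \<Union> (set (P i))" using PP i u by (simp add: level_partition_def)
    then have "\<exists>j. j < length (P i) \<and> u \<in> P i ! j" by (auto simp: in_set_conv_nth)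
    then show ?thesis unfolding f_def by (rule someI_ex)
  qed
  have fwalk: "\<exists>p. is_walk V E p \<and> hd p = u \<and> last p = v \<and> length p = Suc (f i)"
    if i: "i \<in> {1..k}" for i
    using walk_level[OF sg, of "P i" v "f i" u] PP i fP[OF i] by blast
  have fe: "e \<le> f i" if i: "i \<in> {1..k}" for i
  proof -
    have "gdist V E u v \<le> f i" unfolding gdist_def
      by (rule Least_le) (use fwalk[OF i] in blast)
    then show ?thesis using u e_def by simp
  qed
  let ?H = "Max ((\<lambda>i. height (P i)) ` {1..k})"
  have fH: "f i \<le> ?H" if i: "i \<in> {1..k}" for i
  proof -
    have "height (P i) \<le> ?H" by (rule Max_ge) (use i in auto)
    then show ?thesis using fP[OF i] unfolding height_def by linarith
  qed
  have inj: "inj_on f {1..k}"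
    unfolding inj_on_def
  proof (intro ballI impI)
    fix i l assume i: "i \<in> {1..k}" and l: "l \<in> {1..k}" and eq: "f i = f l"
    show "i = l"
    proof (rule ccontr)
      assume "i \<noteq> l"
      then have "level_disjoint (P i) (P l)" using D i l by blast
      moreover have "1 \<le> f i" using fe[OF i] e1 by simp
      moreover have "f i \<le> height (P i)" "f i \<le> height (P l)"
        using fP[OF i] fP[OF l] eq by (auto simp: height_def)
      ultimately have "P i ! f i \<inter> P l ! f i = {}" unfolding level_disjoint_def by auto
      then show False using fP[OF i] fP[OF l] eq by auto
    qed
  qed
  have bnd: "\<forall>i\<in>{1..k}. e \<le> f i \<and> f i \<le> ?H" using fe fH by blast
  have ne: "{1..k} \<noteq> {}" using k1 by auto
  have A1: "e + k - 1 \<le> ?H" using comb1[OF inj _ bnd ne] by simp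
  have A2: "e + 2 * k - 2 \<le> ?H" if bip: "bipartite_graph V E"
  proof -
    obtain A where A: "\<forall>x y. E x y \<longrightarrow> (x \<in> A \<longleftrightarrow> y \<notin> A)"
      using bip unfolding bipartite_graph_def by blast
    obtain q where q: "is_walk V E q" "hd q = u" "last q = v" "length q = Suc e"
      using ex_walk[OF u(1)] u e_def by auto
    have pe: "v \<in> A \<longleftrightarrow> (u \<in> A \<longleftrightarrow> even e)" using walk_parity2[OF q(1) A q(2-4)] .
    have "\<forall>i\<in>{1..k}. even (f i) = even e"
    proof
      fix i assume i: "i \<in> {1..k}"
      obtain p where p: "is_walk V E p" "hd p = u" "last p = v" "length p = Suc (f i)"
        using fwalk[OF i] by blast
      have "v \<in> A \<longleftrightarrow> (u \<in> A \<longleftrightarrow> even (f i))" using walk_parity2[OF p(1) A p(2-4)] .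
      then show "even (f i) = even e" using pe by blast
    qed
    then show ?thesis using comb2[OF inj _ bnd ne] by simp
  qed
  show ?thesis using A1 A2 e_def by auto
qed

end
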